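(* Let $D$ be a tangle diagram with topmost region $0$. For each segment $i$ set \[ \mathcal{F}(w_i)=s^+_{i^{\uparrow}}\,x_i^+\,(x_i^-)^{-1}\,(s^+_{i^{\uparrow}})^{-1}, \] an automorphism of the object $0$ in $\Pi(D)$, where $w_i$ is the Wirtinger generator associated with $i$. Then $\mathcal{F}$ is a well-defined group homomorphism (functor) from the Wirtinger group $\pi(D)$ to the automorphism group of the object $0$ in $\Pi(D)$.
   Context: Tangle diagrams: $D$ is an oriented tangle diagram in $[0,1]^2$, viewed as a 4-valent graph. Segments are the edges of the graph; a strand is cut at each crossing, over or under. Regions are the components of the complement of the graph in the square. The topmost region $0$ is the region containing the top side of the square. Arcs are the maximal chains of segments joined at crossings where they pass over. Above and below: for a segment $i$, $i^{\uparrow}$ is the region on the left of $i$ with respect to its orientation and $i^{\downarrow}$ the one on its right. Crossing labels: rotate a crossing so both strands point right. The incoming segments are $1$ (upper left) and $2$ (lower left). The outgoing segments are $1'$ (lower right, continuing $1$) and $2'$ (upper right, continuing $2$). The crossing is positive if strand $1\to1'$ is over, negative if strand $2\to2'$ is over. Wirtinger group $\pi(D)$: one generator per arc, with $w_i$ the generator of the arc containing segment $i$. The relations are $w_{2'}=w_1^{-1}w_2w_1$ at each positive crossing and $w_{1'}=w_2w_1w_2^{-1}$ at each negative crossing. Fundamental groupoid $\Pi(D)$: objects are regions. There are generators $x_i^+,x_i^-:i^{\uparrow}\to i^{\downarrow}$ for each segment $i$ (paths passing over, respectively under, the segment). Composition is written left to right ($fg$ means $f$ then $g$). At each crossing the relations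 are $x_1^+x_2^+=x_{2'}^+x_{1'}^+$ and $x_1^-x_2^-=x_{2'}^-x_{1'}^-$, together with $x_1^-x_2^+=x_{2'}^+x_{1'}^-$ (positive crossing) or $x_1^+x_2^-=x_{2'}^-x_{1'}^+$ (negative crossing). Over paths: for a region $j$, choose a sequence of adjacent regions from $0$ to $j$ crossing segments $i_1,\dots,i_k$, and set $s_j^+=(x_{i_1}^+)^{\epsilon_1}\cdots(x_{i_k}^+)^{\epsilon_k}$. Here $\epsilon_t=+1$ if segment $i_t$ is crossed from $i_t^{\uparrow}$ to $i_t^{\downarrow}$ and $-1$ otherwise. This morphism $0\to j$ is independent of the chosen sequence. *)

theory Defs
  imports "HOL-Algebra.Group"
begin

text \<open>A letter is a generator together with a direction (True = the generator
itself, False = its formal inverse).  Composition is written left to right: the word u @ v means u then v.\<close>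

type_synonym 'g word = "('g \<times> bool) list"

fun is_path :: "('g \<Rightarrow> 'o) \<Rightarrow> ('g \<Rightarrow> 'o) \<Rightarrow> 'g set \<Rightarrow> 'o \<Rightarrow> 'g word \<Rightarrow> 'o \<Rightarrow> bool" where
  "is_path s t G a [] b = (a = b)"
| "is_path s t G a ((g, d) # w) b =
     (g \<in> G \<and> (if d then s g = a \<and> is_path s t G (t g) w b
                   else t g = a \<and> is_path s t G (s g) w b))"

definition inv_word :: "'g word \<Rightarrow> 'g word" where
  "inv_word w = rev (map (\<lambda>(g, d). (g, \<not> d)) w)"

inductive path_eq ::
  "('g \<Rightarrow> 'o) \<Rightarrow> ('g \<Rightarrow> 'o) \<Rightarrow> 'g set \<Rightarrow> ('g word \<times> 'g word) set
     \<Rightarrow> 'o \<Rightarrow> 'o \<Rightarrow> 'g word \<Rightarrow> 'g word \<Rightarrow> bool"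
  for s t G rels where
  pe_refl: "is_path s t G a w b \<Longrightarrow> path_eq s t G rels a b w w"
| pe_sym: "path_eq s t G rels a b u v \<Longrightarrow> path_eq s t G rels a b v u"
| pe_trans: "path_eq s t G rels a b u v \<Longrightarrow> path_eq s t G rels a b v w
             \<Longrightarrow> path_eq s t G rels a b u w"
| pe_cancel: "is_path s t G a (u @ [(g, d), (g, \<not> d)] @ v) b \<Longrightarrow>
             path_eq s t G rels a b (u @ [(g, d), (g, \<not> d)] @ v) (u @ v)"
| pe_rel: "(l, r) \<in> rels \<Longrightarrow> is_path s t G a (u @ l @ v) b \<Longrightarrow>
           is_path s t G a (u @ r @ v) b \<Longrightarrow>
           path_eq s t G rels a b (u @ l @ v) (u @ r @ v)"

definition path_rel ::
  "('g \<Rightarrow> 'o) \<Rightarrow> ('g \<Rightarrow> 'o) \<Rightarrow> 'g set \<Rightarrow> ('g word \<times> 'g word) set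
     \<Rightarrow> 'o \<Rightarrow> 'o \<Rightarrow> ('g word \<times> 'g word) set" where
  "path_rel s t G rels a b = {(u, v). path_eq s t G rels a b u v}"

definition vertex_group ::
  "('g \<Rightarrow> 'o) \<Rightarrow> ('g \<Rightarrow> 'o) \<Rightarrow> 'g set \<Rightarrow> ('g word \<times> 'g word) set
     \<Rightarrow> 'o \<Rightarrow> 'g word set monoid" where
  "vertex_group s t G rels a =
     \<lparr>carrier = {w. is_path s t G a w a} // path_rel s t G rels a a,
      mult = (\<lambda>X Y. path_rel s t G rels a a `` {(SOME x. x \<in> X) @ (SOME y. y \<in> Y)}),
      one = path_rel s t G rels a a `` {[]}\<rparr>"

text \<open>Segments 's, regions 'r, crossings 'c.  above i = i-up (region to the left
of i), below i = i-down (region to the right of i).  At a crossing c (rotated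
so both strands point right): in1 = 1 (upper left), in2 = 2 (lower left),
out1 = 1' (lower right, continuing 1), out2 = 2' (upper right, continuing 2);
positive c iff strand 1 -> 1' passes over.\<close>

record ('s, 'r, 'c) tangle_diagram =
  segs :: "'s set"
  regs :: "'r set"
  top_region :: 'r
  above :: "'s \<Rightarrow> 'r"
  below :: "'s \<Rightarrow> 'r"
  crossings :: "'c set"
  positive :: "'c \<Rightarrow> bool"
  in1 :: "'c \<Rightarrow> 's"
  in2 :: "'c \<Rightarrow> 's"
  out1 :: "'c \<Rightarrow> 's"
  out2 :: "'c \<Rightarrow> 's"

definition wf_diagram :: "('s, 'r, 'c) tangle_diagram \<Rightarrow> bool" where
  "wf_diagram D \<longleftrightarrow>
     finite (segs D) \<and> finite (regs D) \<and> finite (crossings D) \<and>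
     top_region D \<in> regs D \<and>
     (\<forall>i \<in> segs D. above D i \<in> regs D \<and> below D i \<in> regs D) \<and>
     (\<forall>c \<in> crossings D.
        in1 D c \<in> segs D \<and> in2 D c \<in> segs D \<and> out1 D c \<in> segs D \<and> out2 D c \<in> segs D \<and>
        above D (in1 D c) = above D (out2 D c) \<and>
        below D (in1 D c) = above D (in2 D c) \<and>
        below D (in2 D c) = below D (out1 D c) \<and>
        above D (out1 D c) = below D (out2 D c))"

definition over_joins :: "('s, 'r, 'c) tangle_diagram \<Rightarrow> ('s \<times> 's) set" where
  "over_joins D =
     {(in1 D c, out1 D c) | c. c \<in> crossings D \<and> positive D c} \<union>
     {(in2 D c, out2 D c) | c. c \<in> crossings D \<and> \<not> positive D c}"

definition arc_rel :: "('s, 'r, 'c) tangle_diagram \<Rightarrow> ('s \<times> 's) set" where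
  "arc_rel D = (Id_on (segs D) \<union> over_joins D \<union> (over_joins D)\<inverse>)\<^sup>*"

definition arc_of :: "('s, 'r, 'c) tangle_diagram \<Rightarrow> 's \<Rightarrow> 's set" where
  "arc_of D i = arc_rel D `` {i}"

definition arcs :: "('s, 'r, 'c) tangle_diagram \<Rightarrow> 's set set" where
  "arcs D = segs D // arc_rel D"

definition wirt_rels :: "('s, 'r, 'c) tangle_diagram \<Rightarrow> ('s set word \<times> 's set word) set" where
  "wirt_rels D =
     {([(arc_of D (out2 D c), True)],
       [(arc_of D (in1 D c), False), (arc_of D (in2 D c), True), (arc_of D (in1 D c), True)])
      | c. c \<in> crossings D \<and> positive D c} \<union>
     {([(arc_of D (out1 D c), True)],
       [(arc_of D (in2 D c), True), (arc_of D (in1 D c), True), (arc_of D (in2 D c), False)])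
      | c. c \<in> crossings D \<and> \<not> positive D c}"

definition wirtinger_group :: "('s, 'r, 'c) tangle_diagram \<Rightarrow> 's set word set monoid" where
  "wirtinger_group D = vertex_group (\<lambda>_. ()) (\<lambda>_. ()) (arcs D) (wirt_rels D) ()"

definition wirt_gen :: "('s, 'r, 'c) tangle_diagram \<Rightarrow> 's \<Rightarrow> 's set word set" where
  "wirt_gen D i = path_rel (\<lambda>_. ()) (\<lambda>_. ()) (arcs D) (wirt_rels D) () () `` {[(arc_of D i, True)]}"

text \<open>Generators (i, True) = x_i^+ (over) and (i, False) = x_i^- (under),
both from above i to below i.\<close>

abbreviation Pi_src :: "('s, 'r, 'c) tangle_diagram \<Rightarrow> 's \<times> bool \<Rightarrow> 'r" where
  "Pi_src D g \<equiv> above D (fst g)"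

abbreviation Pi_tgt :: "('s, 'r, 'c) tangle_diagram \<Rightarrow> 's \<times> bool \<Rightarrow> 'r" where
  "Pi_tgt D g \<equiv> below D (fst g)"

definition Pi_gens :: "('s, 'r, 'c) tangle_diagram \<Rightarrow> ('s \<times> bool) set" where
  "Pi_gens D = segs D \<times> UNIV"

definition Pi_rels :: "('s, 'r, 'c) tangle_diagram \<Rightarrow> (('s \<times> bool) word \<times> ('s \<times> bool) word) set" where
  "Pi_rels D =
     (\<Union>c \<in> crossings D.
       {([((in1 D c, True), True), ((in2 D c, True), True)],
         [((out2 D c, True), True), ((out1 D c, True), True)]),
        ([((in1 D c, False), True), ((in2 D c, False), True)],
         [((out2 D c, False), True), ((out1 D c, False), True)]),
        (if positive D c then
          ([((in1 D c, False), True), ((in2 D c, True), True)],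
           [((out2 D c, True), True), ((out1 D c, False), True)])
         else
          ([((in1 D c, True), True), ((in2 D c, False), True)],
           [((out2 D c, False), True), ((out1 D c, True), True)]))})"

abbreviation Pi_eq :: "('s, 'r, 'c) tangle_diagram \<Rightarrow> 'r \<Rightarrow> 'r \<Rightarrow> ('s \<times> bool) word \<Rightarrow> ('s \<times> bool) word \<Rightarrow> bool" where
  "Pi_eq D \<equiv> path_eq (Pi_src D) (Pi_tgt D) (Pi_gens D) (Pi_rels D)"

definition Aut_top :: "('s, 'r, 'c) tangle_diagram \<Rightarrow> ('s \<times> bool) word set monoid" where
  "Aut_top D = vertex_group (Pi_src D) (Pi_tgt D) (Pi_gens D) (Pi_rels D) (top_region D)"

text \<open>Over paths: a sequence of adjacent regions from the top region to j
crossing segments i_1..i_k gives the word of letters (x_{i_t}^+)^{eps_t};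
these are exactly the paths top -> j using only over generators.\<close>
definition over_words :: "('s, 'r, 'c) tangle_diagram \<Rightarrow> 'r \<Rightarrow> ('s \<times> bool) word set" where
  "over_words D j =
     {w. is_path (Pi_src D) (Pi_tgt D) (Pi_gens D) (top_region D) w j \<and>
         (\<forall>((i, ov), d) \<in> set w. ov)}"

definition s_plus :: "('s, 'r, 'c) tangle_diagram \<Rightarrow> 'r \<Rightarrow> ('s \<times> bool) word" where
  "s_plus D j = (SOME w. w \<in> over_words D j)"

definition F_word :: "('s, 'r, 'c) tangle_diagram \<Rightarrow> 's \<Rightarrow> ('s \<times> bool) word" where
  "F_word D i = s_plus D (above D i) @ [((i, True), True), ((i, False), False)]
                 @ inv_word (s_plus D (above D i))"

definition F_val :: "('s, 'r, 'c) tangle_diagram \<Rightarrow> 's \<Rightarrow> ('s \<times> bool) word set" where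
  "F_val D i = path_rel (Pi_src D) (Pi_tgt D) (Pi_gens D) (Pi_rels D) (top_region D) (top_region D)
                 `` {F_word D i}"

end

theory Submission
  imports Defs
begin

lemma inv_word_Nil[simp]: "inv_word [] = []"
  by (simp add: inv_word_def)
lemma inv_word_Cons[simp]: "inv_word ((g, d) # w) = inv_word w @ [(g, \<not> d)]"
  by (simp add: inv_word_def)
lemma inv_word_append[simp]: "inv_word (u @ v) = inv_word v @ inv_word u"
  by (simp add: inv_word_def)
lemma inv_word_inv_word[simp]: "inv_word (inv_word w) = w"
  by (induction w) (auto simp: inv_word_def)

context
  fixes s :: "'g \<Rightarrow> 'o" and t :: "'g \<Rightarrow> 'o" and G :: "'g set"
    and rels :: "('g word \<times> 'g word) set"
begin

abbreviation ip where "ip \<equiv> is_path s t G"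
abbreviation pe where "pe \<equiv> path_eq s t G rels"

lemma ip_append: "ip a (u @ v) b \<longleftrightarrow> (\<exists>m. ip a u m \<and> ip m v b)"
proof (induction u arbitrary: a)
  case Nil then show ?case by simp
next
  case (Cons x u) then show ?case by (cases x) auto
qed

lemma ip_appendI: "ip a u m \<Longrightarrow> ip m v b \<Longrightarrow> ip a (u @ v) b"
  using ip_append by blast

lemma ip_unique: "ip a u b \<Longrightarrow> ip a u b' \<Longrightarrow> b = b'"
proof (induction u arbitrary: a)
  case Nil then show ?case by simp
next
  case (Cons x u) then show ?case by (cases x) (auto split: if_splits)
qed

lemma ip_cancel: "ip a (u @ [(g, d), (g, \<not> d)] @ v) b \<Longrightarrow> ip a (u @ v) b"
  by (auto simp: ip_append split: if_splits)

lemma ip_inv: "ip a w b \<Longrightarrow> ip b (inv_word w) a"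
proof (induction w arbitrary: a)
  case Nil then show ?case by simp
next
  case (Cons x u) then show ?case by (cases x) (auto simp: ip_append split: if_splits)
qed

lemma pe_paths: "pe a b u v \<Longrightarrow> ip a u b \<and> ip a v b"
  by (induction rule: path_eq.induct) (use ip_cancel in blast)+

lemma pe_app_right: "pe a b u u' \<Longrightarrow> ip b w c \<Longrightarrow> pe a c (u @ w) (u' @ w)"
proof (induction rule: path_eq.induct)
  case (pe_refl a w' b) then show ?case by (auto intro: path_eq.pe_refl ip_appendI)
next
  case (pe_sym a b u v) then show ?case by (auto intro: path_eq.pe_sym)
next
  case (pe_trans a b u v w') then show ?case by (auto intro: path_eq.pe_trans)
next
  case (pe_cancel a u g d v b)
  have "ip a ((u @ [(g, d), (g, \<not> d)] @ v) @ w) c"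
    by (rule ip_appendI[OF pe_cancel.hyps pe_cancel.prems])
  then have "pe a c (u @ [(g, d), (g, \<not> d)] @ (v @ w)) (u @ (v @ w))"
    by (intro path_eq.pe_cancel) simp
  then show ?case by simp
next
  case (pe_rel l r a u v b)
  have "ip a ((u @ l @ v) @ w) c" "ip a ((u @ r @ v) @ w) c"
    by (rule ip_appendI[OF pe_rel.hyps(2) pe_rel.prems], rule ip_appendI[OF pe_rel.hyps(3) pe_rel.prems])
  then have "pe a c (u @ l @ (v @ w)) (u @ r @ (v @ w))"
    by (intro path_eq.pe_rel[OF pe_rel.hyps(1)]) simp_all
  then show ?case by simp
qed

lemma pe_app_left: "pe b c u u' \<Longrightarrow> ip a w b \<Longrightarrow> pe a c (w @ u) (w @ u')"
proof (induction rule: path_eq.induct)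
  case (pe_refl a' w' b) then show ?case by (auto intro: path_eq.pe_refl ip_appendI)
next
  case (pe_sym a b u v) then show ?case by (auto intro: path_eq.pe_sym)
next
  case (pe_trans a b u v w') then show ?case by (auto intro: path_eq.pe_trans)
next
  case (pe_cancel b' u g d v c')
  have "pe a c' ((w @ u) @ [(g, d), (g, \<not> d)] @ v) ((w @ u) @ v)"
    by (rule path_eq.pe_cancel) (use pe_cancel in \<open>auto intro: ip_appendI\<close>)
  then show ?case by simp
next
  case (pe_rel l r b' u v c')
  have "pe a c' ((w @ u) @ l @ v) ((w @ u) @ r @ v)"
    by (rule path_eq.pe_rel) (use pe_rel in \<open>auto intro: ip_appendI\<close>)
  then show ?case by simp
qed

lemma pe_app: "pe a b u u' \<Longrightarrow> pe b c v v' \<Longrightarrow> pe a c (u @ v) (u' @ v')"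
  by (meson path_eq.pe_trans pe_app_left pe_app_right pe_paths)

lemma pe_refl': "ip a w b \<Longrightarrow> pe a b w w"
  by (rule path_eq.pe_refl)

lemma pe_self_inv: "ip a w b \<Longrightarrow> pe a a (w @ inv_word w) []"
proof (induction w arbitrary: a)
  case Nil then show ?case by (auto intro: pe_refl')
next
  case (Cons x w)
  obtain g d where x: "x = (g, d)" by (cases x)
  from Cons.prems x obtain m where g: "g \<in> G" "ip a [(g, d)] m" and w: "ip m w b"
    by (auto split: if_splits)
  have bk: "ip m [(g, \<not> d)] a" using g by (auto split: if_splits)
  have "pe a a ([(g, d)] @ (w @ inv_word w) @ [(g, \<not> d)]) ([(g, d)] @ [] @ [(g, \<not> d)])"
    by (rule pe_app_left[OF pe_app_right[OF Cons.IH[OF w] bk] g(2)])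
  moreover have "pe a a ([] @ [(g, d), (g, \<not> d)] @ []) ([] @ [])"
    by (rule path_eq.pe_cancel) (use g bk in \<open>auto split: if_splits\<close>)
  ultimately show ?case using x by (auto intro: path_eq.pe_trans)
qed

lemma pe_inv_self: "ip a w b \<Longrightarrow> pe b b (inv_word w @ w) []"
  using pe_self_inv[OF ip_inv, of a w b] by simp

lemma pe_inv: "pe a b u v \<Longrightarrow> pe b a (inv_word u) (inv_word v)"
proof -
  assume h: "pe a b u v"
  then have pu: "ip a u b" and pv: "ip a v b" using pe_paths by auto
  have iu: "ip b (inv_word u) a" and iv: "ip b (inv_word v) a" using pu pv ip_inv by auto
  have "pe b a (inv_word u @ (v @ inv_word v)) (inv_word u @ [])"
    by (rule pe_app_left[OF pe_self_inv[OF pv] iu])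
  moreover have "pe b a (inv_word u @ (u @ inv_word v)) (inv_word u @ (v @ inv_word v))"
    by (rule pe_app_left[OF pe_app_right[OF h iv] iu])
  moreover have "pe b a ((inv_word u @ u) @ inv_word v) ([] @ inv_word v)"
    by (rule pe_app_right[OF pe_inv_self[OF pu] iv])
  ultimately show ?thesis
    by simp (meson path_eq.pe_sym path_eq.pe_trans)
qed

lemma pe_ctx: assumes "pe x y l r" "ip a A x" "ip y C b" "X = A @ l @ C" "Y = A @ r @ C"
  shows "pe a b X Y"
  using pe_app_left[OF pe_app_right[OF assms(1) assms(3)] assms(2)] assms(4,5) by simp

lemma pe_rel1: "(l, r) \<in> rels \<Longrightarrow> ip a l b \<Longrightarrow> ip a r b \<Longrightarrow> pe a b l r"
  using path_eq.pe_rel[of l r rels s t G a "[]" "[]" b] by simp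

lemma pe_canc1: "ip x [(g, d), (g, \<not> d)] x \<Longrightarrow> pe x x [(g, d), (g, \<not> d)] []"
  using path_eq.pe_cancel[of s t G x "[]" g d "[]" x rels] by simp

lemma conj_cong: "pe b b m m' \<Longrightarrow> ip a w b \<Longrightarrow> pe a a (w @ m @ inv_word w) (w @ m' @ inv_word w)"
  by (rule pe_ctx[of b b m m' a w "inv_word w"]) (auto intro: ip_inv)

lemma conj_change: "pe a b w w' \<Longrightarrow> ip b m b \<Longrightarrow> pe a a (w @ m @ inv_word w) (w' @ m @ inv_word w')"
  by (rule pe_app[OF _ pe_app[OF pe_refl' pe_inv]]) auto

lemma conj_mult: "ip a w b \<Longrightarrow> ip b m1 b \<Longrightarrow> ip b m2 b \<Longrightarrow>
    pe a a ((w @ m1 @ inv_word w) @ (w @ m2 @ inv_word w)) (w @ (m1 @ m2) @ inv_word w)"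
  by (rule pe_ctx[OF pe_inv_self, of a w b a "w @ m1" "m2 @ inv_word w" a])
     (auto intro: ip_appendI ip_inv)

end

lemma pe_trans'[trans]: "path_eq s t G rels a b u v \<Longrightarrow> path_eq s t G rels a b v w \<Longrightarrow> path_eq s t G rels a b u w"
  by (rule path_eq.pe_trans)


context
  fixes s :: "'g \<Rightarrow> 'o" and t :: "'g \<Rightarrow> 'o" and G :: "'g set"
    and rels :: "('g word \<times> 'g word) set"
    and pA mA pB mB qA nA qB nB :: 'g and T L B R :: 'o
  assumes st: "pA \<in> G" "mA \<in> G" "pB \<in> G" "mB \<in> G" "qA \<in> G" "nA \<in> G" "qB \<in> G" "nB \<in> G"
    "s pA = T" "t pA = L" "s mA = T" "t mA = L"
    "s pB = L" "t pB = B" "s mB = L" "t mB = B"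
    "s qA = R" "t qA = B" "s nA = R" "t nA = B"
    "s qB = T" "t qB = R" "s nB = T" "t nB = R"
    and RA: "([(pA, True), (pB, True)], [(qB, True), (qA, True)]) \<in> rels"
    and RB: "([(mA, True), (mB, True)], [(nB, True), (nA, True)]) \<in> rels"
begin

abbreviation "IP \<equiv> is_path s t G"
abbreviation "PE \<equiv> path_eq s t G rels"

lemma rA: "PE T B [(pA, True), (pB, True)] [(qB, True), (qA, True)]"
  by (rule pe_rel1[OF RA]) (simp_all add: st)
lemma rAi: "PE B T [(pB, False), (pA, False)] [(qA, False), (qB, False)]"
  using pe_inv[OF rA] by simp
lemma rB: "PE T B [(mA, True), (mB, True)] [(nB, True), (nA, True)]"
  by (rule pe_rel1[OF RB]) (simp_all add: st)
lemma rBi: "PE B T [(mB, False), (mA, False)] [(nA, False), (nB, False)]"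
  using pe_inv[OF rB] by simp

lemma cc: "IP x [(g, d), (g, \<not> d)] x \<Longrightarrow> PE x x [(g, d), (g, \<not> d)] []"
  by (rule pe_canc1)


context
  assumes RP: "([(mA, True), (pB, True)], [(qB, True), (nA, True)]) \<in> rels"
begin
lemma rP: "PE T B [(mA, True), (pB, True)] [(qB, True), (nA, True)]"
  by (rule pe_rel1[OF RP]) (simp_all add: st)
lemma rPi: "PE B T [(pB, False), (mA, False)] [(nA, False), (qB, False)]"
  using pe_inv[OF rP] by simp
lemma M1: "PE T T [(pA, True), (mA, False)] [(qB, True), (qA, True), (nA, False), (qB, False)]"
proof -
  have "PE T T [(pA, True), (pB, True), (pB, False), (mA, False)] [(pA, True), (mA, False)]"
    by (rule pe_ctx[OF cc[of L pB True], where A="[(pA, True)]" and C="[(mA, False)]"]) (simp_all add: st)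
  then have "PE T T [(pA, True), (mA, False)] [(pA, True), (pB, True), (pB, False), (mA, False)]" by (rule path_eq.pe_sym)
  also have "PE T T [(pA, True), (pB, True), (pB, False), (mA, False)] [(qB, True), (qA, True), (pB, False), (mA, False)]"
    by (rule pe_ctx[OF rA, where A="[]" and C="[(pB, False), (mA, False)]"]) (simp_all add: st)
  also have "PE T T [(qB, True), (qA, True), (pB, False), (mA, False)] [(qB, True), (qA, True), (nA, False), (qB, False)]"
    by (rule pe_ctx[OF rPi, where A="[(qB, True), (qA, True)]" and C="[]"]) (simp_all add: st)
  finally show ?thesis .
qed
lemma M3: "PE T T [(qB, True), (nB, False)] [(mA, True), (pA, False), (pA, True), (pB, True), (mB, False), (pA, False), (pA, True), (mA, False)]"
proof -
  have "PE T T [(mA, True), (pA, False), (pA, True), (pB, True), (mB, False), (pA, False), (pA, True), (mA, False)] [(mA, True), (pB, True), (mB, False), (pA, False), (pA, True), (mA, False)]"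
    by (rule pe_ctx[OF cc[of L pA False], where A="[(mA, True)]" and C="[(pB, True), (mB, False), (pA, False), (pA, True), (mA, False)]"]) (simp_all add: st)
  also have "PE T T [(mA, True), (pB, True), (mB, False), (pA, False), (pA, True), (mA, False)] [(mA, True), (pB, True), (mB, False), (mA, False)]"
    by (rule pe_ctx[OF cc[of L pA False], where A="[(mA, True), (pB, True), (mB, False)]" and C="[(mA, False)]"]) (simp_all add: st)
  also have "PE T T [(mA, True), (pB, True), (mB, False), (mA, False)] [(qB, True), (nA, True), (mB, False), (mA, False)]"
    by (rule pe_ctx[OF rP, where A="[]" and C="[(mB, False), (mA, False)]"]) (simp_all add: st)
  also have "PE T T [(qB, True), (nA, True), (mB, False), (mA, False)] [(qB, True), (nA, True), (nA, False), (nB, False)]"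
    by (rule pe_ctx[OF rBi, where A="[(qB, True), (nA, True)]" and C="[]"]) (simp_all add: st)
  also have "PE T T [(qB, True), (nA, True), (nA, False), (nB, False)] [(qB, True), (nB, False)]"
    by (rule pe_ctx[OF cc[of R nA True], where A="[(qB, True)]" and C="[(nB, False)]"]) (simp_all add: st)
  finally show ?thesis by (rule path_eq.pe_sym)
qed
end

context
  assumes RN: "([(pA, True), (mB, True)], [(nB, True), (qA, True)]) \<in> rels"
begin
lemma rN: "PE T B [(pA, True), (mB, True)] [(nB, True), (qA, True)]"
  by (rule pe_rel1[OF RN]) (simp_all add: st)
lemma rNi: "PE B T [(mB, False), (pA, False)] [(qA, False), (nB, False)]"
  using pe_inv[OF rN] by simp
lemma M2: "PE T T [(pA, True), (pB, True), (mB, False), (pA, False)] [(qB, True), (nB, False)]"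
proof -
  have "PE T T [(pA, True), (pB, True), (mB, False), (pA, False)] [(qB, True), (qA, True), (mB, False), (pA, False)]"
    by (rule pe_ctx[OF rA, where A="[]" and C="[(mB, False), (pA, False)]"]) (simp_all add: st)
  also have "PE T T [(qB, True), (qA, True), (mB, False), (pA, False)] [(qB, True), (qA, True), (qA, False), (nB, False)]"
    by (rule pe_ctx[OF rNi, where A="[(qB, True), (qA, True)]" and C="[]"]) (simp_all add: st)
  also have "PE T T [(qB, True), (qA, True), (qA, False), (nB, False)] [(qB, True), (nB, False)]"
    by (rule pe_ctx[OF cc[of R qA True], where A="[(qB, True)]" and C="[(nB, False)]"]) (simp_all add: st)
  finally show ?thesis .
qed
lemma M4: "PE T T [(qB, True), (qA, True), (nA, False), (qB, False)] [(pA, True), (pB, True), (mB, False), (pA, False), (pA, True), (mA, False), (pA, True), (mB, True), (pB, False), (pA, False)]"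
proof -
  have "PE T T [(pA, True), (pB, True), (mB, False), (pA, False), (pA, True), (mA, False), (pA, True), (mB, True), (pB, False), (pA, False)] [(pA, True), (pB, True), (mB, False), (mA, False), (pA, True), (mB, True), (pB, False), (pA, False)]"
    by (rule pe_ctx[OF cc[of L pA False], where A="[(pA, True), (pB, True), (mB, False)]" and C="[(mA, False), (pA, True), (mB, True), (pB, False), (pA, False)]"]) (simp_all add: st)
  also have "PE T T [(pA, True), (pB, True), (mB, False), (mA, False), (pA, True), (mB, True), (pB, False), (pA, False)] [(qB, True), (qA, True), (mB, False), (mA, False), (pA, True), (mB, True), (pB, False), (pA, False)]"
    by (rule pe_ctx[OF rA, where A="[]" and C="[(mB, False), (mA, False), (pA, True), (mB, True), (pB, False), (pA, False)]"]) (simp_all add: st)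
  also have "PE T T [(qB, True), (qA, True), (mB, False), (mA, False), (pA, True), (mB, True), (pB, False), (pA, False)] [(qB, True), (qA, True), (nA, False), (nB, False), (pA, True), (mB, True), (pB, False), (pA, False)]"
    by (rule pe_ctx[OF rBi, where A="[(qB, True), (qA, True)]" and C="[(pA, True), (mB, True), (pB, False), (pA, False)]"]) (simp_all add: st)
  also have "PE T T [(qB, True), (qA, True), (nA, False), (nB, False), (pA, True), (mB, True), (pB, False), (pA, False)] [(qB, True), (qA, True), (nA, False), (nB, False), (nB, True), (qA, True), (pB, False), (pA, False)]"
    by (rule pe_ctx[OF rN, where A="[(qB, True), (qA, True), (nA, False), (nB, False)]" and C="[(pB, False), (pA, False)]"]) (simp_all add: st)
  also have "PE T T [(qB, True), (qA, True), (nA, False), (nB, False), (nB, True), (qA, True), (pB, False), (pA, False)] [(qB, True), (qA, True), (nA, False), (nB, False), (nB, True), (qA, True), (qA, False), (qB, False)]"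
    by (rule pe_ctx[OF rAi, where A="[(qB, True), (qA, True), (nA, False), (nB, False), (nB, True), (qA, True)]" and C="[]"]) (simp_all add: st)
  also have "PE T T [(qB, True), (qA, True), (nA, False), (nB, False), (nB, True), (qA, True), (qA, False), (qB, False)] [(qB, True), (qA, True), (nA, False), (qA, True), (qA, False), (qB, False)]"
    by (rule pe_ctx[OF cc[of R nB False], where A="[(qB, True), (qA, True), (nA, False)]" and C="[(qA, True), (qA, False), (qB, False)]"]) (simp_all add: st)
  also have "PE T T [(qB, True), (qA, True), (nA, False), (qA, True), (qA, False), (qB, False)] [(qB, True), (qA, True), (nA, False), (qB, False)]"
    by (rule pe_ctx[OF cc[of R qA True], where A="[(qB, True), (qA, True), (nA, False)]" and C="[(qB, False)]"]) (simp_all add: st)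
  finally show ?thesis by (rule path_eq.pe_sym)
qed
end
end



lemma conj_mult3:
  assumes "is_path s t G a w b" "is_path s t G b m1 b" "is_path s t G b m2 b" "is_path s t G b m3 b"
  shows "path_eq s t G rels a a ((w @ m1 @ inv_word w) @ (w @ m2 @ inv_word w) @ (w @ m3 @ inv_word w))
           (w @ (m1 @ m2 @ m3) @ inv_word w)"
proof -
  have p1: "is_path s t G a (w @ m1 @ inv_word w) a"
    using assms by (auto intro!: ip_appendI ip_inv)
  have "path_eq s t G rels a a ((w @ m1 @ inv_word w) @ ((w @ m2 @ inv_word w) @ (w @ m3 @ inv_word w)))
           ((w @ m1 @ inv_word w) @ (w @ (m2 @ m3) @ inv_word w))"
    by (rule pe_app_left[OF conj_mult p1]) (use assms in auto)
  also have "path_eq s t G rels a a ((w @ m1 @ inv_word w) @ (w @ (m2 @ m3) @ inv_word w))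
           (w @ (m1 @ (m2 @ m3)) @ inv_word w)"
    by (rule conj_mult) (use assms in \<open>auto intro: ip_appendI\<close>)
  finally show ?thesis by simp
qed

definition repr :: "'a set \<Rightarrow> 'a" where "repr A = (SOME i. i \<in> A)"

definition Fl :: "('s, 'r, 'c) tangle_diagram \<Rightarrow> 's set \<times> bool \<Rightarrow> ('s \<times> bool) word" where
  "Fl D x = (if snd x then F_word D (repr (fst x)) else inv_word (F_word D (repr (fst x))))"

definition Fw :: "('s, 'r, 'c) tangle_diagram \<Rightarrow> 's set word \<Rightarrow> ('s \<times> bool) word" where
  "Fw D w = concat (map (Fl D) w)"

lemma Fw_simps[simp]: "Fw D [] = []" "Fw D (x # w) = Fl D x @ Fw D w" "Fw D (u @ v) = Fw D u @ Fw D v"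
  by (simp_all add: Fw_def)

lemma wpath_iff: "is_path (\<lambda>_. ()) (\<lambda>_. ()) G () w () \<longleftrightarrow> (\<forall>x\<in>set w. fst x \<in> G)"
proof (induction w)
  case Nil then show ?case by simp
next
  case (Cons x w) then show ?case by (cases x) auto
qed

lemma class_eq: "path_eq s t G rels a b u v \<Longrightarrow> path_rel s t G rels a b `` {u} = path_rel s t G rels a b `` {v}"
  unfolding path_rel_def by (auto intro: path_eq.pe_trans path_eq.pe_sym)

lemma some_class: "is_path s t G a u b \<Longrightarrow> path_eq s t G rels a b u (SOME x. x \<in> path_rel s t G rels a b `` {u})"
proof -
  assume "is_path s t G a u b"
  then have "u \<in> path_rel s t G rels a b `` {u}" by (simp add: path_rel_def path_eq.pe_refl)
  then have "(SOME x. x \<in> path_rel s t G rels a b `` {u}) \<in> path_rel s t G rels a b `` {u}" by (rule someI)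
  then show ?thesis by (simp add: path_rel_def)
qed

lemma wpath_iff': "is_path (\<lambda>_. ()) (\<lambda>_. ()) G (a::unit) w (b::unit) \<longleftrightarrow> (\<forall>x\<in>set w. fst x \<in> G)"
proof (induction w arbitrary: a)
  case Nil then show ?case by simp
next
  case (Cons x w) then show ?case by (cases x) auto
qed

context
  fixes D :: "('s, 'r, 'c) tangle_diagram"
  assumes wf: "wf_diagram D"
    and ex: "\<forall>j \<in> regs D. over_words D j \<noteq> {}"
    and ind: "\<forall>j \<in> regs D. \<forall>u \<in> over_words D j. \<forall>v \<in> over_words D j.
                              Pi_eq D (top_region D) j u v"
begin

abbreviation "IPD \<equiv> is_path (Pi_src D) (Pi_tgt D) (Pi_gens D)"
abbreviation "tp \<equiv> top_region D"

lemma top_reg: "top_region D \<in> regs D" using wf by (simp add: wf_diagram_def)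
lemma seg_regs: "i \<in> segs D \<Longrightarrow> above D i \<in> regs D \<and> below D i \<in> regs D"
  using wf by (simp add: wf_diagram_def)

lemma s_plus_ow: "j \<in> regs D \<Longrightarrow> s_plus D j \<in> over_words D j"
  unfolding s_plus_def using ex by (simp add: some_in_eq)

lemma s_plus_path: "j \<in> regs D \<Longrightarrow> IPD tp (s_plus D j) j"
  using s_plus_ow by (simp add: over_words_def)

lemma ow_ext: "w \<in> over_words D j \<Longrightarrow> i \<in> segs D \<Longrightarrow> above D i = j \<Longrightarrow>
    w @ [((i, True), True)] \<in> over_words D (below D i)"
  unfolding over_words_def by (auto intro!: ip_appendI simp: Pi_gens_def)

lemma F_path: "i \<in> segs D \<Longrightarrow> IPD tp (F_word D i) tp"
  unfolding F_word_def using seg_regs[of i] s_plus_path[of "above D i"]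
  by (auto intro!: ip_appendI ip_inv simp: Pi_gens_def)

context
  fixes c assumes c: "c \<in> crossings D"
begin

abbreviation "a1 \<equiv> in1 D c"
abbreviation "a2 \<equiv> in2 D c"
abbreviation "b1 \<equiv> out1 D c"
abbreviation "b2 \<equiv> out2 D c"
abbreviation "rT \<equiv> above D (in1 D c)"
abbreviation "rL \<equiv> below D (in1 D c)"
abbreviation "rB \<equiv> below D (in2 D c)"
abbreviation "rR \<equiv> above D (out1 D c)"
abbreviation "sT \<equiv> s_plus D rT"

lemma cf: "a1 \<in> segs D" "a2 \<in> segs D" "b1 \<in> segs D" "b2 \<in> segs D"
  "above D a2 = rL" "below D b1 = rB" "above D b2 = rT" "below D b2 = rR"
  using wf c by (auto simp: wf_diagram_def)

lemma cregs: "rT \<in> regs D" "rL \<in> regs D" "rB \<in> regs D" "rR \<in> regs D"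
  using seg_regs cf by auto

lemma RA_D: "([((a1, True), True), ((a2, True), True)], [((b2, True), True), ((b1, True), True)]) \<in> Pi_rels D"
  using c unfolding Pi_rels_def by blast
lemma RB_D: "([((a1, False), True), ((a2, False), True)], [((b2, False), True), ((b1, False), True)]) \<in> Pi_rels D"
  using c unfolding Pi_rels_def by blast
lemma RP_D: "positive D c \<Longrightarrow> ([((a1, False), True), ((a2, True), True)], [((b2, True), True), ((b1, False), True)]) \<in> Pi_rels D"
  using c unfolding Pi_rels_def by (auto intro!: UN_I[of c])
lemma RN_D: "\<not> positive D c \<Longrightarrow> ([((a1, True), True), ((a2, False), True)], [((b2, False), True), ((b1, True), True)]) \<in> Pi_rels D"
  using c unfolding Pi_rels_def by (auto intro!: UN_I[of c])

lemma M1_D: "positive D c \<Longrightarrow> Pi_eq D rT rT [((a1, True), True), ((a1, False), False)] [((b2, True), True), ((b1, True), True), ((b1, False), False), ((b2, True), False)]"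
  by (rule M1[where s="Pi_src D" and t="Pi_tgt D" and G="Pi_gens D" and rels="Pi_rels D"
   and pA="(a1, True)" and mA="(a1, False)" and pB="(a2, True)" and mB="(a2, False)"
   and qA="(b1, True)" and nA="(b1, False)" and qB="(b2, True)" and nB="(b2, False)"
   and T=rT and L=rL and B=rB and R=rR]) (simp_all add: cf Pi_gens_def RA_D RB_D RP_D)

lemma M3_D: "positive D c \<Longrightarrow> Pi_eq D rT rT [((b2, True), True), ((b2, False), False)] [((a1, False), True), ((a1, True), False), ((a1, True), True), ((a2, True), True), ((a2, False), False), ((a1, True), False), ((a1, True), True), ((a1, False), False)]"
  by (rule M3[where s="Pi_src D" and t="Pi_tgt D" and G="Pi_gens D" and rels="Pi_rels D"
   and pA="(a1, True)" and mA="(a1, False)" and pB="(a2, True)" and mB="(a2, False)"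
   and qA="(b1, True)" and nA="(b1, False)" and qB="(b2, True)" and nB="(b2, False)"
   and T=rT and L=rL and B=rB and R=rR]) (simp_all add: cf Pi_gens_def RA_D RB_D RP_D)

lemma M2_D: "\<not> positive D c \<Longrightarrow> Pi_eq D rT rT [((a1, True), True), ((a2, True), True), ((a2, False), False), ((a1, True), False)] [((b2, True), True), ((b2, False), False)]"
  by (rule M2[where s="Pi_src D" and t="Pi_tgt D" and G="Pi_gens D" and rels="Pi_rels D"
   and pA="(a1, True)" and mA="(a1, False)" and pB="(a2, True)" and mB="(a2, False)"
   and qA="(b1, True)" and nA="(b1, False)" and qB="(b2, True)" and nB="(b2, False)"
   and T=rT and L=rL and B=rB and R=rR]) (simp_all add: cf Pi_gens_def RA_D RB_D RN_D)

lemma M4_D: "\<not> positive D c \<Longrightarrow> Pi_eq D rT rT [((b2, True), True), ((b1, True), True), ((b1, False), False), ((b2, True), False)] [((a1, True), True), ((a2, True), True), ((a2, False), False), ((a1, True), False), ((a1, True), True), ((a1, False), False), ((a1, True), True), ((a2, False), True), ((a2, True), False), ((a1, True), False)]"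
  by (rule M4[where s="Pi_src D" and t="Pi_tgt D" and G="Pi_gens D" and rels="Pi_rels D"
   and pA="(a1, True)" and mA="(a1, False)" and pB="(a2, True)" and mB="(a2, False)"
   and qA="(b1, True)" and nA="(b1, False)" and qB="(b2, True)" and nB="(b2, False)"
   and T=rT and L=rL and B=rB and R=rR]) (simp_all add: cf Pi_gens_def RA_D RB_D RN_D)

lemma sT_path: "IPD tp sT rT"
  using s_plus_path cregs by simp

lemma sR_eq: "Pi_eq D tp rR (s_plus D rR) (sT @ [((b2, True), True)])"
proof -
  have "sT @ [((b2, True), True)] \<in> over_words D (below D b2)"
    by (rule ow_ext) (use s_plus_ow cregs cf in auto)
  then show ?thesis using ind cregs s_plus_ow cf by auto
qed

lemma sL_eq: "Pi_eq D tp rL (s_plus D rL) (sT @ [((a1, True), True)])"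
proof -
  have "sT @ [((a1, True), True)] \<in> over_words D (below D a1)"
    by (rule ow_ext) (use s_plus_ow cregs cf in auto)
  then show ?thesis using ind cregs s_plus_ow cf by auto
qed

lemma F_in2: "Pi_eq D tp tp (F_word D a2) (sT @ [((a1, True), True), ((a2, True), True), ((a2, False), False), ((a1, True), False)] @ inv_word sT)"
proof -
  have "Pi_eq D tp tp (F_word D a2) ((sT @ [((a1, True), True)]) @ [((a2, True), True), ((a2, False), False)] @ inv_word (sT @ [((a1, True), True)]))"
    unfolding F_word_def cf by (rule conj_change[OF sL_eq]) (simp add: cf Pi_gens_def)
  then show ?thesis by simp
qed

lemma F_out1: "Pi_eq D tp tp (F_word D b1) (sT @ [((b2, True), True), ((b1, True), True), ((b1, False), False), ((b2, True), False)] @ inv_word sT)"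
proof -
  have "Pi_eq D tp tp (F_word D b1) ((sT @ [((b2, True), True)]) @ [((b1, True), True), ((b1, False), False)] @ inv_word (sT @ [((b2, True), True)]))"
    unfolding F_word_def cf by (rule conj_change[OF sR_eq]) (simp add: cf Pi_gens_def)
  then show ?thesis by simp
qed

lemma F_in1: "F_word D a1 = sT @ [((a1, True), True), ((a1, False), False)] @ inv_word sT"
  by (simp add: F_word_def)

lemma F_out2: "F_word D b2 = sT @ [((b2, True), True), ((b2, False), False)] @ inv_word sT"
  by (simp add: F_word_def cf)


lemma cross_pos_arc: "positive D c \<Longrightarrow> Pi_eq D tp tp (F_word D a1) (F_word D b1)"
proof -
  assume pos: "positive D c"
  have "Pi_eq D tp tp (F_word D a1) (sT @ [((b2, True), True), ((b1, True), True), ((b1, False), False), ((b2, True), False)] @ inv_word sT)"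
    unfolding F_in1 by (rule conj_cong[OF M1_D[OF pos] sT_path])
  then show ?thesis by (rule path_eq.pe_trans[OF _ path_eq.pe_sym[OF F_out1]])
qed

lemma cross_neg_arc: "\<not> positive D c \<Longrightarrow> Pi_eq D tp tp (F_word D a2) (F_word D b2)"
proof -
  assume neg: "\<not> positive D c"
  have "Pi_eq D tp tp (sT @ [((a1, True), True), ((a2, True), True), ((a2, False), False), ((a1, True), False)] @ inv_word sT) (F_word D b2)"
    unfolding F_out2 by (rule conj_cong[OF M2_D[OF neg] sT_path])
  then show ?thesis by (rule path_eq.pe_trans[OF F_in2])
qed

lemma mid_paths: "IPD rT [((a1, False), True), ((a1, True), False)] rT" "IPD rT [((a1, True), True), ((a2, True), True), ((a2, False), False), ((a1, True), False)] rT" "IPD rT [((a1, True), True), ((a1, False), False)] rT" "IPD rT [((a1, True), True), ((a2, False), True), ((a2, True), False), ((a1, True), False)] rT"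
  by (simp_all add: cf Pi_gens_def)

lemma cross_pos_wirt: "positive D c \<Longrightarrow>
   Pi_eq D tp tp (F_word D b2) (inv_word (F_word D a1) @ F_word D a2 @ F_word D a1)"
proof -
  assume pos: "positive D c"
  have i1: "inv_word (F_word D a1) = sT @ [((a1, False), True), ((a1, True), False)] @ inv_word sT" by (simp add: F_in1)
  have pA: "IPD tp (F_word D a1) tp" "IPD tp (inv_word (F_word D a1)) tp"
    using F_path[OF cf(1)] ip_inv[OF F_path[OF cf(1)]] by auto
  have "Pi_eq D tp tp (F_word D b2) (sT @ ([((a1, False), True), ((a1, True), False)] @ [((a1, True), True), ((a2, True), True), ((a2, False), False), ((a1, True), False)] @ [((a1, True), True), ((a1, False), False)]) @ inv_word sT)"
    unfolding F_out2 using conj_cong[OF M3_D[OF pos] sT_path] by simp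
  also have "Pi_eq D tp tp (sT @ ([((a1, False), True), ((a1, True), False)] @ [((a1, True), True), ((a2, True), True), ((a2, False), False), ((a1, True), False)] @ [((a1, True), True), ((a1, False), False)]) @ inv_word sT)
     ((sT @ [((a1, False), True), ((a1, True), False)] @ inv_word sT) @ (sT @ [((a1, True), True), ((a2, True), True), ((a2, False), False), ((a1, True), False)] @ inv_word sT) @ (sT @ [((a1, True), True), ((a1, False), False)] @ inv_word sT))"
    by (rule path_eq.pe_sym[OF conj_mult3[OF sT_path mid_paths(1) mid_paths(2) mid_paths(3)]])
  also have "Pi_eq D tp tp ((sT @ [((a1, False), True), ((a1, True), False)] @ inv_word sT) @ (sT @ [((a1, True), True), ((a2, True), True), ((a2, False), False), ((a1, True), False)] @ inv_word sT) @ (sT @ [((a1, True), True), ((a1, False), False)] @ inv_word sT))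
      (inv_word (F_word D a1) @ F_word D a2 @ F_word D a1)"
    unfolding i1[symmetric] F_in1[symmetric]
    by (rule pe_app[OF pe_refl' pe_app[OF path_eq.pe_sym[OF F_in2] pe_refl']]) (use pA in simp_all)
  finally show ?thesis .
qed

lemma cross_neg_wirt: "\<not> positive D c \<Longrightarrow>
   Pi_eq D tp tp (F_word D b1) (F_word D a2 @ F_word D a1 @ inv_word (F_word D a2))"
proof -
  assume neg: "\<not> positive D c"
  have i2: "Pi_eq D tp tp (inv_word (F_word D a2)) (sT @ [((a1, True), True), ((a2, False), True), ((a2, True), False), ((a1, True), False)] @ inv_word sT)"
    using pe_inv[OF F_in2] by simp
  have pA: "IPD tp (F_word D a1) tp"
    using F_path[OF cf(1)] by auto
  have "Pi_eq D tp tp (F_word D b1) (sT @ [((b2, True), True), ((b1, True), True), ((b1, False), False), ((b2, True), False)] @ inv_word sT)" by (rule F_out1)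
  also have "Pi_eq D tp tp (sT @ [((b2, True), True), ((b1, True), True), ((b1, False), False), ((b2, True), False)] @ inv_word sT) (sT @ ([((a1, True), True), ((a2, True), True), ((a2, False), False), ((a1, True), False)] @ [((a1, True), True), ((a1, False), False)] @ [((a1, True), True), ((a2, False), True), ((a2, True), False), ((a1, True), False)]) @ inv_word sT)"
    using conj_cong[OF M4_D[OF neg] sT_path] by simp
  also have "Pi_eq D tp tp (sT @ ([((a1, True), True), ((a2, True), True), ((a2, False), False), ((a1, True), False)] @ [((a1, True), True), ((a1, False), False)] @ [((a1, True), True), ((a2, False), True), ((a2, True), False), ((a1, True), False)]) @ inv_word sT)
     ((sT @ [((a1, True), True), ((a2, True), True), ((a2, False), False), ((a1, True), False)] @ inv_word sT) @ (sT @ [((a1, True), True), ((a1, False), False)] @ inv_word sT) @ (sT @ [((a1, True), True), ((a2, False), True), ((a2, True), False), ((a1, True), False)] @ inv_word sT))"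
    by (rule path_eq.pe_sym[OF conj_mult3[OF sT_path mid_paths(2) mid_paths(3) mid_paths(4)]])
  also have "Pi_eq D tp tp ((sT @ [((a1, True), True), ((a2, True), True), ((a2, False), False), ((a1, True), False)] @ inv_word sT) @ (sT @ [((a1, True), True), ((a1, False), False)] @ inv_word sT) @ (sT @ [((a1, True), True), ((a2, False), True), ((a2, True), False), ((a1, True), False)] @ inv_word sT))
      (F_word D a2 @ F_word D a1 @ inv_word (F_word D a2))"
    unfolding F_in1[symmetric]
    by (rule pe_app[OF path_eq.pe_sym[OF F_in2] pe_app[OF pe_refl' path_eq.pe_sym[OF i2]]]) (use pA in simp_all)
  finally show ?thesis .
qed

end

lemma arc_step_segs: "(i, j) \<in> Id_on (segs D) \<union> over_joins D \<union> (over_joins D)\<inverse> \<Longrightarrow> i \<in> segs D \<and> j \<in> segs D"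
  using wf unfolding over_joins_def wf_diagram_def by auto

lemma arc_segs: "(i, j) \<in> arc_rel D \<Longrightarrow> i \<in> segs D \<Longrightarrow> j \<in> segs D"
  unfolding arc_rel_def
proof (induction rule: rtrancl_induct)
  case base then show ?case .
next
  case (step y z) then show ?case using arc_step_segs[of y z] by blast
qed

lemma arc_sym: "(i, j) \<in> arc_rel D \<Longrightarrow> (j, i) \<in> arc_rel D"
proof -
  have "sym (Id_on (segs D) \<union> over_joins D \<union> (over_joins D)\<inverse>)" by (auto simp: sym_def)
  then have "sym (arc_rel D)" unfolding arc_rel_def by (rule sym_rtrancl)
  then show "(i, j) \<in> arc_rel D \<Longrightarrow> (j, i) \<in> arc_rel D" by (rule symD)
qed

lemma arc_trans: "(i, j) \<in> arc_rel D \<Longrightarrow> (j, k) \<in> arc_rel D \<Longrightarrow> (i, k) \<in> arc_rel D"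
  unfolding arc_rel_def by (rule rtrancl_trans)

lemma oj_F: "(y, z) \<in> over_joins D \<Longrightarrow> Pi_eq D tp tp (F_word D y) (F_word D z)"
proof -
  assume "(y, z) \<in> over_joins D"
  then consider (p) c where "c \<in> crossings D" "positive D c" "y = in1 D c" "z = out1 D c"
    | (n) c where "c \<in> crossings D" "\<not> positive D c" "y = in2 D c" "z = out2 D c"
    unfolding over_joins_def by blast
  then show ?thesis
  proof cases
    case p then show ?thesis using cross_pos_arc[of c] by simp
  next
    case n then show ?thesis using cross_neg_arc[of c] by simp
  qed
qed

lemma arc_F: "(i, j) \<in> arc_rel D \<Longrightarrow> i \<in> segs D \<Longrightarrow> Pi_eq D tp tp (F_word D i) (F_word D j)"
  unfolding arc_rel_def
proof (induction rule: rtrancl_induct)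
  case base then show ?case by (rule pe_refl'[OF F_path])
next
  case (step y z)
  have "Pi_eq D tp tp (F_word D y) (F_word D z)"
  proof -
    from step.hyps(2) consider "y = z" "y \<in> segs D" | "(y, z) \<in> over_joins D" | "(z, y) \<in> over_joins D"
      by auto
    then show ?thesis
    proof cases
      case 1
      have "Pi_eq D tp tp (F_word D y) (F_word D y)" by (rule pe_refl'[OF F_path[OF 1(2)]])
      then show ?thesis using 1(1) by simp
    next
      case 2 then show ?thesis by (rule oj_F)
    next
      case 3 then show ?thesis by (rule path_eq.pe_sym[OF oj_F])
    qed
  qed
  then show ?case using step.IH[OF step.prems] by (rule path_eq.pe_trans[rotated])
qed

lemma arc_of_self: "i \<in> segs D \<Longrightarrow> i \<in> arc_of D i"
  unfolding arc_of_def arc_rel_def by auto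

lemma arc_of_eq: "(i, j) \<in> arc_rel D \<Longrightarrow> arc_of D i = arc_of D j"
  unfolding arc_of_def using arc_sym arc_trans by blast

lemma arcs_repr: "A \<in> arcs D \<Longrightarrow> repr A \<in> segs D \<and> A = arc_of D (repr A)"
proof -
  assume "A \<in> arcs D"
  then have "A \<in> segs D // arc_rel D" by (simp add: arcs_def)
  then obtain i where i0: "i \<in> segs D" "A = arc_rel D `` {i}" by (elim quotientE) blast
  then have i: "i \<in> segs D" "A = arc_of D i" by (simp_all add: arc_of_def)
  have "i \<in> A" using arc_of_self[OF i(1)] i(2) by simp
  then have "repr A \<in> A" unfolding repr_def by (rule someI)
  then have r: "(i, repr A) \<in> arc_rel D" using i(2) by (simp add: arc_of_def)
  show ?thesis using arc_segs[OF r i(1)] trans[OF i(2) arc_of_eq[OF r]] by blast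
qed

lemma arc_of_arcs: "i \<in> segs D \<Longrightarrow> arc_of D i \<in> arcs D"
  unfolding arcs_def arc_of_def by (rule quotientI)

lemma Fl_arc: "i \<in> segs D \<Longrightarrow>
   Pi_eq D tp tp (Fl D (arc_of D i, d)) (if d then F_word D i else inv_word (F_word D i))"
proof -
  assume i: "i \<in> segs D"
  have "repr (arc_of D i) \<in> arc_of D i" unfolding repr_def using arc_of_self[OF i] by (rule someI)
  then have "(i, repr (arc_of D i)) \<in> arc_rel D" by (simp add: arc_of_def)
  then have e: "Pi_eq D tp tp (F_word D (repr (arc_of D i))) (F_word D i)"
    by (rule path_eq.pe_sym[OF arc_F[OF _ i]])
  show ?thesis
  proof (cases d)
    case True then show ?thesis using e by (simp add: Fl_def)
  next
    case False then show ?thesis using pe_inv[OF e] by (simp add: Fl_def)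
  qed
qed

lemma Fl_path: "A \<in> arcs D \<Longrightarrow> IPD tp (Fl D (A, d)) tp"
proof -
  assume "A \<in> arcs D"
  then have p: "IPD tp (F_word D (repr A)) tp" using F_path[OF conjunct1[OF arcs_repr]] by simp
  show ?thesis using p ip_inv[OF p] unfolding Fl_def by simp
qed

lemma Fw_path: "\<forall>x\<in>set w. fst x \<in> arcs D \<Longrightarrow> IPD tp (Fw D w) tp"
proof (induction w)
  case Nil then show ?case by simp
next
  case (Cons x w)
  obtain A d where x: "x = (A, d)" by (cases x)
  have "A \<in> arcs D" using Cons.prems x by simp
  then have a: "IPD tp (Fl D (A, d)) tp" by (rule Fl_path)
  have b: "IPD tp (Fw D w) tp" using Cons.IH Cons.prems by simp
  show ?case using ip_appendI[OF a b] x by simp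
qed

lemma wirt_F: "(l, r) \<in> wirt_rels D \<Longrightarrow> Pi_eq D tp tp (Fw D l) (Fw D r)"
proof -
  assume "(l, r) \<in> wirt_rels D"
  then consider (p) c where "c \<in> crossings D" "positive D c"
      "l = [(arc_of D (out2 D c), True)]"
      "r = [(arc_of D (in1 D c), False), (arc_of D (in2 D c), True), (arc_of D (in1 D c), True)]"
    | (n) c where "c \<in> crossings D" "\<not> positive D c"
      "l = [(arc_of D (out1 D c), True)]"
      "r = [(arc_of D (in2 D c), True), (arc_of D (in1 D c), True), (arc_of D (in2 D c), False)]"
    unfolding wirt_rels_def by blast
  then show ?thesis
  proof cases
    case p
    note cfc = cf[OF p(1)]
    have "Pi_eq D tp tp (Fw D l) (F_word D (out2 D c))"
      using Fl_arc[OF cfc(4), of True] p by simp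
    also have "Pi_eq D tp tp (F_word D (out2 D c))
        (inv_word (F_word D (in1 D c)) @ F_word D (in2 D c) @ F_word D (in1 D c))"
      by (rule cross_pos_wirt[OF p(1,2)])
    also have "Pi_eq D tp tp (inv_word (F_word D (in1 D c)) @ F_word D (in2 D c) @ F_word D (in1 D c)) (Fw D r)"
      using pe_app[OF path_eq.pe_sym[OF Fl_arc[OF cfc(1), of False]]
             pe_app[OF path_eq.pe_sym[OF Fl_arc[OF cfc(2), of True]] path_eq.pe_sym[OF Fl_arc[OF cfc(1), of True]]]]
        p by simp
    finally show ?thesis .
  next
    case n
    note cfc = cf[OF n(1)]
    have "Pi_eq D tp tp (Fw D l) (F_word D (out1 D c))"
      using Fl_arc[OF cfc(3), of True] n by simp
    also have "Pi_eq D tp tp (F_word D (out1 D c))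
        (F_word D (in2 D c) @ F_word D (in1 D c) @ inv_word (F_word D (in2 D c)))"
      by (rule cross_neg_wirt[OF n(1,2)])
    also have "Pi_eq D tp tp (F_word D (in2 D c) @ F_word D (in1 D c) @ inv_word (F_word D (in2 D c))) (Fw D r)"
      using pe_app[OF path_eq.pe_sym[OF Fl_arc[OF cfc(2), of True]]
             pe_app[OF path_eq.pe_sym[OF Fl_arc[OF cfc(1), of True]] path_eq.pe_sym[OF Fl_arc[OF cfc(2), of False]]]]
        n by simp
    finally show ?thesis .
  qed
qed

lemma Fl_cancel: "g \<in> arcs D \<Longrightarrow> Pi_eq D tp tp (Fl D (g, d) @ Fl D (g, \<not> d)) []"
proof -
  assume g: "g \<in> arcs D"
  have p: "IPD tp (F_word D (repr g)) tp" using arcs_repr[OF g] F_path by auto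
  show ?thesis
  proof (cases d)
    case True then show ?thesis using pe_self_inv[OF p, where rels="Pi_rels D"] by (simp add: Fl_def)
  next
    case False then show ?thesis using pe_self_inv[OF ip_inv[OF p], where rels="Pi_rels D"] by (simp add: Fl_def)
  qed
qed

lemma Fw_resp: "path_eq (\<lambda>_. ()) (\<lambda>_. ()) (arcs D) (wirt_rels D) a b u v \<Longrightarrow> Pi_eq D tp tp (Fw D u) (Fw D v)"
proof (induction rule: path_eq.induct)
  case (pe_refl a w b) then show ?case by (intro pe_refl' Fw_path) (simp add: wpath_iff')
next
  case (pe_sym a b u v) from pe_sym.IH show ?case by (rule path_eq.pe_sym)
next
  case (pe_trans a b u v w) from pe_trans.IH show ?case by (rule path_eq.pe_trans)
next
  case (pe_cancel a u g d v b)
  have w: "\<forall>x\<in>set (u @ [(g, d), (g, \<not> d)] @ v). fst x \<in> arcs D"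
    using pe_cancel.hyps by (simp only: wpath_iff')
  then have u: "\<forall>x\<in>set u. fst x \<in> arcs D" and v: "\<forall>x\<in>set v. fst x \<in> arcs D" and g: "g \<in> arcs D"
    by auto
  have "Pi_eq D tp tp (Fw D u @ (Fl D (g, d) @ Fl D (g, \<not> d)) @ Fw D v) (Fw D u @ [] @ Fw D v)"
    by (rule pe_ctx[OF Fl_cancel[OF g] Fw_path[OF u] Fw_path[OF v] refl refl])
  then show ?case by simp
next
  case (pe_rel l r a u v b)
  have w: "\<forall>x\<in>set (u @ l @ v). fst x \<in> arcs D"
    using pe_rel.hyps(2) by (simp only: wpath_iff')
  then have u: "\<forall>x\<in>set u. fst x \<in> arcs D" and v: "\<forall>x\<in>set v. fst x \<in> arcs D"
    by auto
  have "Pi_eq D tp tp (Fw D u @ Fw D l @ Fw D v) (Fw D u @ Fw D r @ Fw D v)"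
    by (rule pe_ctx[OF wirt_F[OF pe_rel.hyps(1)] Fw_path[OF u] Fw_path[OF v] refl refl])
  then show ?case by simp
qed

lemma main_ctx: "\<exists>\<phi>. \<phi> \<in> hom (wirtinger_group D) (Aut_top D) \<and>
             (\<forall>i \<in> segs D. \<phi> (wirt_gen D i) = F_val D i)"
proof -
  let ?RW = "path_rel (\<lambda>_. ()) (\<lambda>_. ()) (arcs D) (wirt_rels D) () ()"
  let ?RP = "path_rel (Pi_src D) (Pi_tgt D) (Pi_gens D) (Pi_rels D) tp tp"
  define \<phi> where "\<phi> X = ?RP `` {Fw D (SOME x. x \<in> X)}" for X
  have cls: "\<exists>u. X = ?RW `` {u} \<and> is_path (\<lambda>_. ()) (\<lambda>_. ()) (arcs D) () u ()"
    if "X \<in> carrier (wirtinger_group D)" for X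
  proof -
    have "X \<in> {w. is_path (\<lambda>_. ()) (\<lambda>_. ()) (arcs D) () w ()} // ?RW"
      using that by (simp add: wirtinger_group_def vertex_group_def)
    then show ?thesis by (elim quotientE) blast
  qed
  have img: "\<phi> X = ?RP `` {Fw D u}" if "X = ?RW `` {u}" "is_path (\<lambda>_. ()) (\<lambda>_. ()) (arcs D) () u ()" for X u
  proof -
    have "path_eq (\<lambda>_. ()) (\<lambda>_. ()) (arcs D) (wirt_rels D) () () u (SOME x. x \<in> X)"
      unfolding that(1) by (rule some_class[OF that(2)])
    then show ?thesis unfolding \<phi>_def by (rule class_eq[OF path_eq.pe_sym[OF Fw_resp]])
  qed
  have some_path: "is_path (\<lambda>_. ()) (\<lambda>_. ()) (arcs D) () (SOME x. x \<in> X) ()"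
    if "X \<in> carrier (wirtinger_group D)" for X
  proof -
    from cls[OF that] obtain u where u: "X = ?RW `` {u}" "is_path (\<lambda>_. ()) (\<lambda>_. ()) (arcs D) () u ()"
      by blast
    have "path_eq (\<lambda>_. ()) (\<lambda>_. ()) (arcs D) (wirt_rels D) () () u (SOME x. x \<in> X)"
      unfolding u(1) by (rule some_class[OF u(2)])
    then show ?thesis by (rule conjunct2[OF pe_paths])
  qed
  have "\<phi> \<in> hom (wirtinger_group D) (Aut_top D)"
  proof (rule homI)
    fix X assume X: "X \<in> carrier (wirtinger_group D)"
    have "IPD tp (Fw D (SOME x. x \<in> X)) tp"
      using some_path[OF X] by (intro Fw_path) (simp only: wpath_iff')
    then have "\<phi> X \<in> {w. IPD tp w tp} // ?RP"
      unfolding \<phi>_def by (intro quotientI) simp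
    then show "\<phi> X \<in> carrier (Aut_top D)"
      by (simp add: Aut_top_def vertex_group_def)
  next
    fix X Y assume X: "X \<in> carrier (wirtinger_group D)" and Y: "Y \<in> carrier (wirtinger_group D)"
    define x where "x = (SOME x. x \<in> X)"
    define y where "y = (SOME y. y \<in> Y)"
    have wx: "is_path (\<lambda>_. ()) (\<lambda>_. ()) (arcs D) () x ()" using some_path[OF X] by (simp only: x_def)
    have wy: "is_path (\<lambda>_. ()) (\<lambda>_. ()) (arcs D) () y ()" using some_path[OF Y] by (simp only: y_def)
    have wxy: "is_path (\<lambda>_. ()) (\<lambda>_. ()) (arcs D) () (x @ y) ()" by (rule ip_appendI[OF wx wy])
    have m: "X \<otimes>\<^bsub>wirtinger_group D\<^esub> Y = ?RW `` {x @ y}"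
      by (simp add: wirtinger_group_def vertex_group_def x_def y_def)
    have l: "\<phi> (X \<otimes>\<^bsub>wirtinger_group D\<^esub> Y) = ?RP `` {Fw D (x @ y)}"
      by (rule img[OF m wxy])
    have fx: "IPD tp (Fw D x) tp" using wx by (intro Fw_path) (simp only: wpath_iff')
    have fy: "IPD tp (Fw D y) tp" using wy by (intro Fw_path) (simp only: wpath_iff')
    have "\<phi> X \<otimes>\<^bsub>Aut_top D\<^esub> \<phi> Y = ?RP `` {(SOME a. a \<in> ?RP `` {Fw D x}) @ (SOME b. b \<in> ?RP `` {Fw D y})}"
      by (simp add: Aut_top_def vertex_group_def \<phi>_def x_def y_def)
    also have "\<dots> = ?RP `` {Fw D x @ Fw D y}"
      by (rule class_eq[OF path_eq.pe_sym[OF pe_app[OF some_class[OF fx] some_class[OF fy]]]])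
    finally show "\<phi> (X \<otimes>\<^bsub>wirtinger_group D\<^esub> Y) = \<phi> X \<otimes>\<^bsub>Aut_top D\<^esub> \<phi> Y"
      using l by simp
  qed
  moreover have "\<forall>i \<in> segs D. \<phi> (wirt_gen D i) = F_val D i"
  proof
    fix i assume i: "i \<in> segs D"
    have "\<phi> (wirt_gen D i) = ?RP `` {Fw D [(arc_of D i, True)]}"
      by (rule img) (simp_all add: wirt_gen_def arc_of_arcs[OF i])
    also have "\<dots> = ?RP `` {F_word D i}"
      by (rule class_eq) (use Fl_arc[OF i, of True] in simp)
    finally show "\<phi> (wirt_gen D i) = F_val D i" by (simp add: F_val_def)
  qed
  ultimately show ?thesis by (intro exI[of _ \<phi>] conjI)
qed

end


theorem theorem3p5:
  fixes D :: "('s, 'r, 'c) tangle_diagram"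
  assumes wf: "wf_diagram D"
    and over_paths_exist: "\<forall>j \<in> regs D. over_words D j \<noteq> {}"
    and over_paths_indep: "\<forall>j \<in> regs D. \<forall>u \<in> over_words D j. \<forall>v \<in> over_words D j.
                              Pi_eq D (top_region D) j u v"
  shows "\<exists>\<phi>. \<phi> \<in> hom (wirtinger_group D) (Aut_top D) \<and>
             (\<forall>i \<in> segs D. \<phi> (wirt_gen D i) = F_val D i)"
  by (rule main_ctx[OF wf over_paths_exist over_paths_indep])

end
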